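(* Consider the theory of equality with uninterpreted functions (EUF). Let $G$ be a finite set of EUF predicates and $m := |\mathit{terms}(G)|$. Then $D_T(G) \le 3m$; that is, for every subset $G' \subseteq G$ and every integer $N \ge 3m$, the saturation procedure $\mathrm{Sat}_N(G')$ returns UNSATISFIABLE if and only if $G'$ is unsatisfiable in EUF.
   Context: EUF terms are variables or applications $f(t_1,\dots,t_n)$ of uninterpreted function symbols to terms; EUF predicates are $t_1 = t_2$ or $t_1 \neq t_2$ for terms $t_1,t_2$. $\mathit{terms}(\phi)$ is the set of syntactically distinct subterms occurring in $\phi$ (e.g. $\mathit{terms}(f(h(x))) = \{x, h(x), f(h(x))\}$), and $\mathit{terms}(G)$ is the union over $g\in G$. The inference rules are: from $X=Y$ derive $Y=X$; from $X=Y$ and $Y=Z$ derive $X=Z$; from $X=Y$ and $X\neq Y$ derive $\bot$; from $X_1=Y_1,\dots,X_n=Y_n$ derive $f(X_1,\dots,X_n)=f(Y_1,\dots,Y_n)$. When run on an input set $H$, only equalities between terms in $\mathit{terms}(H)$ are derived. Saturation procedure $\mathrm{Sat}_N(H)$: (1) $W := H$. (2) Repeat $N$ times: $W' := W$; for every predicate $g\notin W'$ derivable in one rule application from predicates all in $W'$, add $g$ to $W$. (3) Return UNSATISFIABLE if $\bot$ is derivable in one rule application from predicates in $W$, else SATISFIABLE. $D_T(G)$ denotes the maximum over $G'\subseteq G$ of the least number $d$ such that $\mathrm{Sat}_N(G')$ correctly decides satisfiability of $G'$ for all $N\ge d$.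
   Formalization: The inference rules of the saturation procedure also include reflexivity, deriving $X=X$ for every term X in terms(H), besides symmetry, transitivity, contradiction and congruence. The statement above fails without it. *)

theory Defs
  imports Main
begin

datatype ('v, 'f) trm = Var 'v | App 'f "('v, 'f) trm list"

datatype ('v, 'f) pred = Eq "('v, 'f) trm" "('v, 'f) trm"
                       | Neq "('v, 'f) trm" "('v, 'f) trm"

fun subterms :: "('v, 'f) trm \<Rightarrow> ('v, 'f) trm set" where
  "subterms (Var x) = {Var x}"
| "subterms (App f ts) = insert (App f ts) (\<Union> (subterms ` set ts))"

fun pred_terms :: "('v, 'f) pred \<Rightarrow> ('v, 'f) trm set" where
  "pred_terms (Eq s t) = subterms s \<union> subterms t"
| "pred_terms (Neq s t) = subterms s \<union> subterms t"

definition terms :: "('v, 'f) pred set \<Rightarrow> ('v, 'f) trm set" where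
  "terms G = (\<Union> g\<in>G. pred_terms g)"

fun eval :: "('f \<Rightarrow> 'd list \<Rightarrow> 'd) \<Rightarrow> ('v \<Rightarrow> 'd) \<Rightarrow> ('v, 'f) trm \<Rightarrow> 'd" where
  "eval I \<sigma> (Var x) = \<sigma> x"
| "eval I \<sigma> (App f ts) = I f (map (eval I \<sigma>) ts)"

fun holds :: "('f \<Rightarrow> 'd list \<Rightarrow> 'd) \<Rightarrow> ('v \<Rightarrow> 'd) \<Rightarrow> ('v, 'f) pred \<Rightarrow> bool" where
  "holds I \<sigma> (Eq s t) = (eval I \<sigma> s = eval I \<sigma> t)"
| "holds I \<sigma> (Neq s t) = (eval I \<sigma> s \<noteq> eval I \<sigma> t)"

definition sat_in :: "'d itself \<Rightarrow> ('v, 'f) pred set \<Rightarrow> bool" where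
  "sat_in _ G = (\<exists>(I :: 'f \<Rightarrow> 'd list \<Rightarrow> 'd) (\<sigma> :: 'v \<Rightarrow> 'd). \<forall>g\<in>G. holds I \<sigma> g)"

text \<open>The domain is fixed to the (infinite) type of terms;
  since every finite satisfiable set of EUF literals has a finite model, which
  embeds into any infinite domain, this agrees with satisfiability over an
  arbitrary domain.\<close>
definition euf_satisfiable :: "('v, 'f) pred set \<Rightarrow> bool" where
  "euf_satisfiable G = sat_in TYPE(('v, 'f) trm) G"

text \<open>One rule application deriving an equality from premises in W, when the
  procedure is run on input H: only equalities between terms of terms(H) are
  derived.\<close>
inductive derivable1 :: "('v, 'f) pred set \<Rightarrow> ('v, 'f) pred set \<Rightarrow> ('v, 'f) pred \<Rightarrow> bool"
  for H W where
  refl:  "X \<in> terms H \<Longrightarrow> derivable1 H W (Eq X X)"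
| sym:   "Eq X Y \<in> W \<Longrightarrow> X \<in> terms H \<Longrightarrow> Y \<in> terms H \<Longrightarrow> derivable1 H W (Eq Y X)"
| trans: "Eq X Y \<in> W \<Longrightarrow> Eq Y Z \<in> W \<Longrightarrow> X \<in> terms H \<Longrightarrow> Z \<in> terms H
          \<Longrightarrow> derivable1 H W (Eq X Z)"
| cong:  "length Xs = length Ys \<Longrightarrow> (\<forall>i<length Xs. Eq (Xs ! i) (Ys ! i) \<in> W)
          \<Longrightarrow> App f Xs \<in> terms H \<Longrightarrow> App f Ys \<in> terms H
          \<Longrightarrow> derivable1 H W (Eq (App f Xs) (App f Ys))"

text \<open>The working set after k rounds of Sat_N(H).\<close>
fun sat_iter :: "nat \<Rightarrow> ('v, 'f) pred set \<Rightarrow> ('v, 'f) pred set" where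
  "sat_iter 0 H = H"
| "sat_iter (Suc k) H =
     (let W' = sat_iter k H in W' \<union> {g. g \<notin> W' \<and> derivable1 H W' g})"

definition bot_derivable :: "('v, 'f) pred set \<Rightarrow> bool" where
  "bot_derivable W = (\<exists>X Y. Eq X Y \<in> W \<and> Neq X Y \<in> W)"

text \<open>Sat_N(H) returns UNSATISFIABLE.\<close>
definition Sat_unsat :: "nat \<Rightarrow> ('v, 'f) pred set \<Rightarrow> bool" where
  "Sat_unsat N H = bot_derivable (sat_iter N H)"

end

theory Submission
  imports Defs
begin



lemma subterms_self: "t \<in> subterms t"
  by (cases t) auto

lemma subterms_trans: "s \<in> subterms t \<Longrightarrow> subterms s \<subseteq> subterms t"
  by (induction t) auto

lemma finite_subterms: "finite (subterms t)"
  by (induction t) auto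

lemma finite_pred_terms: "finite (pred_terms g)"
  by (cases g) (auto simp: finite_subterms)

lemma finite_terms: "finite G \<Longrightarrow> finite (terms G)"
  unfolding terms_def by (auto simp: finite_pred_terms)

lemma terms_mono: "G' \<subseteq> G \<Longrightarrow> terms G' \<subseteq> terms G"
  unfolding terms_def by auto

lemma terms_sub: assumes "App f ts \<in> terms H" "t \<in> set ts" shows "t \<in> terms H"
proof -
  from assms(1) obtain g where g: "g \<in> H" "App f ts \<in> pred_terms g" unfolding terms_def by auto
  have "t \<in> subterms (App f ts)" using assms(2) subterms_self by fastforce
  moreover have "\<exists>u. App f ts \<in> subterms u \<and> subterms u \<subseteq> pred_terms g"
    using g(2) by (cases g) auto
  ultimately have "t \<in> pred_terms g" using subterms_trans by blast
  thus ?thesis using g(1) unfolding terms_def by auto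
qed

lemma terms_Eq: "Eq a b \<in> H \<Longrightarrow> a \<in> terms H \<and> b \<in> terms H"
  unfolding terms_def using subterms_self by fastforce

lemma terms_Neq: "Neq a b \<in> H \<Longrightarrow> a \<in> terms H \<and> b \<in> terms H"
  unfolding terms_def using subterms_self by fastforce

lemma sat_iter_Suc': "sat_iter (Suc k) H = sat_iter k H \<union> {g. derivable1 H (sat_iter k H) g}"
  by (auto simp: Let_def)

declare sat_iter.simps(2)[simp del]

lemma sat_iter_mono: "k \<le> k' \<Longrightarrow> sat_iter k H \<subseteq> sat_iter k' H"
proof (induction k' rule: dec_induct)
  case base then show ?case by simp
next
  case (step n) then show ?case by (auto simp: sat_iter_Suc')
qed

lemma der_in: "derivable1 H (sat_iter k H) g \<Longrightarrow> g \<in> sat_iter (Suc k) H"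
  by (auto simp: sat_iter_Suc')

lemma input_in: "g \<in> H \<Longrightarrow> g \<in> sat_iter k H"
  using sat_iter_mono[of 0 k H] by auto

lemma Neq_in: "Neq X Y \<in> sat_iter k H \<Longrightarrow> Neq X Y \<in> H"
proof (induction k)
  case 0 then show ?case by simp
next
  case (Suc k) then show ?case by (auto simp: sat_iter_Suc' elim: derivable1.cases)
qed

lemma sound:
  assumes "\<forall>g\<in>H. holds I \<sigma> g"
  shows "Eq X Y \<in> sat_iter k H \<Longrightarrow> eval I \<sigma> X = eval I \<sigma> Y"
proof (induction k arbitrary: X Y)
  case 0 then show ?case using assms by fastforce
next
  case (Suc k)
  show ?case
  proof (cases "Eq X Y \<in> sat_iter k H")
    case True then show ?thesis using Suc.IH by blast
  next
    case False
    then have "derivable1 H (sat_iter k H) (Eq X Y)" using Suc.prems by (auto simp: sat_iter_Suc')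
    then show ?thesis
    proof cases
      case (cong Xs Ys f)
      have "map (eval I \<sigma>) Xs = map (eval I \<sigma>) Ys"
        using cong Suc.IH by (auto intro!: nth_equalityI)
      then show ?thesis using cong by simp
    qed (use Suc.IH in auto)
  qed
qed




definition eqv :: "'a set \<Rightarrow> ('a \<times> 'a) set \<Rightarrow> bool" where
  "eqv T P \<longleftrightarrow> P \<subseteq> T \<times> T \<and> (\<forall>x\<in>T. (x,x) \<in> P) \<and> (\<forall>x y. (x,y) \<in> P \<longrightarrow> (y,x) \<in> P)
     \<and> (\<forall>x y z. (x,y) \<in> P \<longrightarrow> (y,z) \<in> P \<longrightarrow> (x,z) \<in> P)"

definition closed :: "('v,'f) pred set \<Rightarrow> (('v,'f) trm \<times> ('v,'f) trm) set \<Rightarrow> bool" where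
  "closed H P \<longleftrightarrow> (\<forall>a b. Eq a b \<in> H \<longrightarrow> (a,b) \<in> P) \<and>
     (\<forall>f Xs Ys. App f Xs \<in> terms H \<and> App f Ys \<in> terms H \<and> length Xs = length Ys \<and>
        (\<forall>i<length Xs. (Xs!i, Ys!i) \<in> P) \<longrightarrow> (App f Xs, App f Ys) \<in> P)"

lemma eqvD:
  assumes "eqv T P"
  shows "P \<subseteq> T \<times> T" "\<And>x. x \<in> T \<Longrightarrow> (x,x) \<in> P" "\<And>x y. (x,y) \<in> P \<Longrightarrow> (y,x) \<in> P"
    "\<And>x y z. (x,y) \<in> P \<Longrightarrow> (y,z) \<in> P \<Longrightarrow> (x,z) \<in> P"
  using assms unfolding eqv_def by blast+




lemma img_comp:
  assumes e: "eqv T P" and e': "eqv T P'" and sub: "P \<subseteq> P'" and x: "x \<in> T"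
  shows "P'``(P``{x}) = P'``{x}"
proof
  show "P'``(P``{x}) \<subseteq> P'``{x}"
  proof
    fix z assume "z \<in> P'``(P``{x})"
    then obtain y where "(x,y) \<in> P" "(y,z) \<in> P'" by auto
    then show "z \<in> P'``{x}" using sub eqvD(4)[OF e'] by blast
  qed
  show "P'``{x} \<subseteq> P'``(P``{x})" using eqvD(2)[OF e x] by blast
qed

lemma card_less:
  assumes fin: "finite T" and e: "eqv T P" and e': "eqv T P'" and sub: "P \<subseteq> P'"
    and ab: "a \<in> T" "b \<in> T" "(a,b) \<in> P'" "(a,b) \<notin> P"
  shows "card ((\<lambda>x. P'``{x}) ` T) < card ((\<lambda>x. P``{x}) ` T)"
proof -
  let ?\<phi> = "\<lambda>C. P'``C"
  let ?Q = "(\<lambda>x. P``{x}) ` T"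
  have im: "(\<lambda>x. P'``{x}) ` T = ?\<phi> ` ?Q"
    using img_comp[OF e e' sub] by (auto simp: image_image)
  have "P'``{a} = P'``{b}"
  proof -
    have "(b,a) \<in> P'" using eqvD(3)[OF e' ab(3)] .
    then show ?thesis using ab(3) eqvD(4)[OF e'] by blast
  qed
  then have 1: "?\<phi> (P``{a}) = ?\<phi> (P``{b})" using img_comp[OF e e' sub] ab by simp
  have 2: "P``{a} \<noteq> P``{b}"
  proof
    assume "P``{a} = P``{b}"
    moreover have "b \<in> P``{b}" using eqvD(2)[OF e ab(2)] by simp
    ultimately show False using ab(4) by (metis Image_singleton_iff)
  qed
  have "\<not> inj_on ?\<phi> ?Q"
  proof
    assume "inj_on ?\<phi> ?Q"
    moreover have "P``{a} \<in> ?Q" "P``{b} \<in> ?Q" using ab by auto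
    ultimately show False using 1 2 unfolding inj_on_def by blast
  qed
  then have "card (?\<phi> ` ?Q) \<noteq> card ?Q"
    using inj_on_iff_eq_card fin by blast
  moreover have "card (?\<phi> ` ?Q) \<le> card ?Q"
    using fin by (intro card_image_le) auto
  ultimately show ?thesis using im by simp
qed




lemma edge:
  assumes eq: "eqv (terms H) P" and nc: "\<not> closed H P"
    and inW: "\<And>X Y. (X,Y) \<in> P \<Longrightarrow> Eq X Y \<in> sat_iter k H"
  shows "\<exists>a b. a \<in> terms H \<and> b \<in> terms H \<and> (a,b) \<notin> P \<and>
           Eq a b \<in> sat_iter (Suc k) H \<and> Eq b a \<in> sat_iter (Suc k) H"
proof (cases "\<forall>a b. Eq a b \<in> H \<longrightarrow> (a,b) \<in> P")
  case False
  then obtain a b where inp: "Eq a b \<in> H" "(a,b) \<notin> P" by blast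
  have t: "a \<in> terms H" "b \<in> terms H" using terms_Eq[OF inp(1)] by auto
  have "Eq a b \<in> sat_iter k H" using input_in[OF inp(1)] .
  then have "derivable1 H (sat_iter k H) (Eq b a)" using t by (intro derivable1.sym)
  then have "Eq b a \<in> sat_iter (Suc k) H" by (rule der_in)
  moreover have "Eq a b \<in> sat_iter (Suc k) H" using input_in[OF inp(1)] .
  ultimately show ?thesis using t inp(2) by blast
next
  case True
  with nc obtain f Xs Ys where cg: "App f Xs \<in> terms H" "App f Ys \<in> terms H" "length Xs = length Ys"
        "\<forall>i<length Xs. (Xs!i, Ys!i) \<in> P" "(App f Xs, App f Ys) \<notin> P"
    unfolding closed_def by blast
  have "\<forall>i<length Xs. Eq (Xs!i) (Ys!i) \<in> sat_iter k H" using cg(4) inW by blast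
  then have "derivable1 H (sat_iter k H) (Eq (App f Xs) (App f Ys))"
    using cg(1-3) by (intro derivable1.cong)
  moreover have "\<forall>i<length Ys. Eq (Ys!i) (Xs!i) \<in> sat_iter k H"
    using cg(3,4) inW eqvD(3)[OF eq] by metis
  then have "derivable1 H (sat_iter k H) (Eq (App f Ys) (App f Xs))"
    using cg(1-3) by (intro derivable1.cong) auto
  ultimately show ?thesis using der_in cg by blast
qed



lemma model:
  fixes H :: "('v,'f) pred set"
  assumes eq: "eqv (terms H) P" and cl: "closed H P"
    and nq: "\<forall>s t. Neq s t \<in> H \<longrightarrow> (s,t) \<notin> P"
  shows "euf_satisfiable H"
proof -
  let ?T = "terms H"
  define rep where "rep X = (SOME Z. (X,Z) \<in> P)" for X :: "('v,'f) trm"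
  have rep1: "(X, rep X) \<in> P" if "X \<in> ?T" for X
    unfolding rep_def using eq that unfolding eqv_def by (metis someI)
  have rep2: "rep X = rep Y" if "(X,Y) \<in> P" for X Y
  proof -
    have "{Z. (X,Z) \<in> P} = {Z. (Y,Z) \<in> P}" using eq that unfolding eqv_def by blast
    then show ?thesis unfolding rep_def by (metis mem_Collect_eq)
  qed
  have rep3: "(X,Y) \<in> P" if "X \<in> ?T" "Y \<in> ?T" "rep X = rep Y" for X Y
    using rep1[OF that(1)] rep1[OF that(2)] that(3) eq unfolding eqv_def by metis
  define I :: "'f \<Rightarrow> ('v,'f) trm list \<Rightarrow> ('v,'f) trm" where
    "I f ds = (if \<exists>ts. App f ts \<in> ?T \<and> map rep ts = ds
               then rep (App f (SOME ts. App f ts \<in> ?T \<and> map rep ts = ds)) else undefined)" for f ds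
  define \<sigma> where "\<sigma> x = rep (Var x)" for x
  have ev: "t \<in> ?T \<Longrightarrow> eval I \<sigma> t = rep t" for t
  proof (induction t)
    case (Var x) then show ?case by (simp add: \<sigma>_def)
  next
    case (App f ts)
    have sub: "t \<in> ?T" if "t \<in> set ts" for t using terms_sub[OF App.prems that] .
    have m: "map (eval I \<sigma>) ts = map rep ts" using App.IH sub by auto
    define ts' where "ts' = (SOME ts'. App f ts' \<in> ?T \<and> map rep ts' = map rep ts)"
    have ex: "\<exists>ts'. App f ts' \<in> ?T \<and> map rep ts' = map rep ts" using App.prems by blast
    have ts': "App f ts' \<in> ?T" "map rep ts' = map rep ts"
      using someI_ex[OF ex] unfolding ts'_def by auto
    have len: "length ts' = length ts" using ts'(2) map_eq_imp_length_eq by blast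
    have "\<forall>i<length ts'. (ts'!i, ts!i) \<in> P"
    proof (intro allI impI)
      fix i assume i: "i < length ts'"
      have "rep (ts'!i) = rep (ts!i)" using ts'(2) i len by (metis nth_map)
      moreover have "ts'!i \<in> ?T" using terms_sub[OF ts'(1)] i by auto
      moreover have "ts!i \<in> ?T" using sub i len by auto
      ultimately show "(ts'!i, ts!i) \<in> P" using rep3 by blast
    qed
    then have "(App f ts', App f ts) \<in> P" using cl ts'(1) App.prems len unfolding closed_def by blast
    then have "rep (App f ts') = rep (App f ts)" by (rule rep2)
    moreover have "eval I \<sigma> (App f ts) = I f (map rep ts)" by (simp only: eval.simps m)
    moreover have "I f (map rep ts) = rep (App f ts')"
      using ex unfolding I_def ts'_def by (simp only: if_True)
    ultimately show ?case by simp
  qed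
  have "\<forall>g\<in>H. holds I \<sigma> g"
  proof
    fix g assume g: "g \<in> H"
    show "holds I \<sigma> g"
    proof (cases g)
      case (Eq s t)
      then have "(s,t) \<in> P" using cl g unfolding closed_def by auto
      moreover have "s \<in> ?T" "t \<in> ?T" using terms_Eq g Eq by auto
      ultimately show ?thesis using Eq ev rep2 by simp
    next
      case (Neq s t)
      then have "(s,t) \<notin> P" using nq g by auto
      moreover have "s \<in> ?T" "t \<in> ?T" using terms_Neq g Neq by auto
      ultimately show ?thesis using Neq ev rep3 by auto
    qed
  qed
  then show ?thesis unfolding euf_satisfiable_def sat_in_def by blast
qed



lemma stage:
  fixes H :: "('v,'f) pred set"
  assumes fin: "finite (terms H)"
  shows "\<exists>P. eqv (terms H) P \<and> (\<forall>X Y. (X,Y) \<in> P \<longrightarrow> Eq X Y \<in> sat_iter (3*j+1) H) \<and>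
             (closed H P \<or> card ((\<lambda>x. P``{x}) ` terms H) + j \<le> card (terms H))"
proof (induction j)
  case 0
  let ?P = "{(x,x) | x. x \<in> terms H}"
  have "eqv (terms H) ?P" unfolding eqv_def by auto
  moreover have "Eq X Y \<in> sat_iter (3*0+1) H" if "(X,Y) \<in> ?P" for X Y
  proof -
    have "derivable1 H (sat_iter 0 H) (Eq X X)" "X = Y" using that by (auto intro: derivable1.refl)
    then show ?thesis using der_in by fastforce
  qed
  moreover have "card ((\<lambda>x. ?P``{x}) ` terms H) + 0 \<le> card (terms H)"
    using card_image_le[OF fin] by simp
  ultimately show ?case by blast
next
  case (Suc j)
  let ?k = "3*j+1"
  from Suc.IH obtain P where P: "eqv (terms H) P" "\<And>X Y. (X,Y) \<in> P \<Longrightarrow> Eq X Y \<in> sat_iter ?k H"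
    "closed H P \<or> card ((\<lambda>x. P``{x}) ` terms H) + j \<le> card (terms H)" by blast
  have mono: "sat_iter ?k H \<subseteq> sat_iter (3 * Suc j + 1) H" by (rule sat_iter_mono) simp
  show ?case
  proof (cases "closed H P")
    case True
    then show ?thesis using P mono by blast
  next
    case False
    then have cb: "card ((\<lambda>x. P``{x}) ` terms H) + j \<le> card (terms H)" using P(3) by blast
    obtain a b where ab: "a \<in> terms H" "b \<in> terms H" "(a,b) \<notin> P"
      "Eq a b \<in> sat_iter (Suc ?k) H" "Eq b a \<in> sat_iter (Suc ?k) H"
      using edge[OF P(1) False P(2)] by blast
    define A where "A = P``{a}"
    define B where "B = P``{b}"
    define P' where "P' = P \<union> (A \<union> B) \<times> (A \<union> B)"
    have AT: "A \<union> B \<subseteq> terms H" using eqvD(1)[OF P(1)] unfolding A_def B_def by blast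
    have Acl: "(x,y) \<in> P \<Longrightarrow> y \<in> A \<union> B \<Longrightarrow> x \<in> A \<union> B" for x y
      unfolding A_def B_def using eqvD(3,4)[OF P(1)] by blast
    have e': "eqv (terms H) P'"
      unfolding eqv_def
    proof (intro conjI allI impI)
      show "P' \<subseteq> terms H \<times> terms H" using eqvD(1)[OF P(1)] AT unfolding P'_def by blast
      show "\<forall>x\<in>terms H. (x, x) \<in> P'" using eqvD(2)[OF P(1)] unfolding P'_def by blast
      show "(y,x) \<in> P'" if "(x,y) \<in> P'" for x y using that eqvD(3)[OF P(1)] unfolding P'_def by blast
      show "(x,z) \<in> P'" if h12: "(x,y) \<in> P'" "(y,z) \<in> P'" for x y z
      proof -
        consider "(x,y) \<in> P" "(y,z) \<in> P" | "(x,y) \<in> P" "y \<in> A \<union> B" "z \<in> A \<union> B"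
          | "x \<in> A \<union> B" "y \<in> A \<union> B" "(y,z) \<in> P" | "x \<in> A \<union> B" "z \<in> A \<union> B"
          using h12 unfolding P'_def by blast
        then show ?thesis
        proof cases
          case 1 then show ?thesis using eqvD(4)[OF P(1)] unfolding P'_def by blast
        next
          case 2 then show ?thesis using Acl unfolding P'_def by blast
        next
          case 3
          then have "(z,y) \<in> P" using eqvD(3)[OF P(1)] by blast
          then show ?thesis using 3 Acl unfolding P'_def by blast
        next
          case 4 then show ?thesis unfolding P'_def by blast
        qed
      qed
    qed
    have W: "Eq X Y \<in> sat_iter (3 * Suc j + 1) H" if "(X,Y) \<in> P'" for X Y
    proof -
      have k3: "3 * Suc j + 1 = Suc (Suc (Suc ?k))" by simp
      have m1: "sat_iter ?k H \<subseteq> sat_iter (Suc (Suc ?k)) H"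
           "sat_iter (Suc ?k) H \<subseteq> sat_iter (Suc (Suc ?k)) H" by (rule sat_iter_mono, simp)+
      have tr: "Eq X Y \<in> sat_iter (3 * Suc j + 1) H"
        if "(X,u) \<in> P" "(v,Y) \<in> P" "Eq u v \<in> sat_iter (Suc ?k) H" for u v
      proof -
        have XT: "X \<in> terms H" "Y \<in> terms H" "v \<in> terms H"
          using that(1,2) eqvD(1)[OF P(1)] by blast+
        have "derivable1 H (sat_iter (Suc ?k) H) (Eq X v)"
          using P(2)[OF that(1)] that(3) XT sat_iter_mono[of ?k "Suc ?k" H]
          by (intro derivable1.trans[of X u]) auto
        then have "Eq X v \<in> sat_iter (Suc (Suc ?k)) H" by (rule der_in)
        moreover have "Eq v Y \<in> sat_iter (Suc (Suc ?k)) H" using P(2)[OF that(2)] m1 by blast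
        ultimately have "derivable1 H (sat_iter (Suc (Suc ?k)) H) (Eq X Y)"
          using XT by (intro derivable1.trans[of X v])
        then show ?thesis unfolding k3 by (rule der_in)
      qed
      show ?thesis
      proof (cases "(X,Y) \<in> P")
        case True then show ?thesis using P(2) mono by blast
      next
        case False
        then have XY: "X \<in> A \<union> B" "Y \<in> A \<union> B" using that unfolding P'_def by auto
        have sa: "(X,a) \<in> P" if "X \<in> A" for X using that eqvD(3)[OF P(1)] unfolding A_def by blast
        have sb: "(X,b) \<in> P" if "X \<in> B" for X using that eqvD(3)[OF P(1)] unfolding B_def by blast
        consider "X \<in> A" "Y \<in> A" | "X \<in> B" "Y \<in> B" | "X \<in> A" "Y \<in> B" | "X \<in> B" "Y \<in> A"
          using XY by blast
        then show ?thesis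
        proof cases
          case 1 then have "(X,Y) \<in> P" using sa eqvD(4)[OF P(1)] unfolding A_def by blast
          then show ?thesis using False by blast
        next
          case 2 then have "(X,Y) \<in> P" using sb eqvD(4)[OF P(1)] unfolding B_def by blast
          then show ?thesis using False by blast
        next
          case 3 then show ?thesis using tr[of a b] sa ab(4) unfolding B_def by blast
        next
          case 4 then show ?thesis using tr[of b a] sb ab(5) unfolding A_def by blast
        qed
      qed
    qed
    have "a \<in> A" using eqvD(2)[OF P(1) ab(1)] unfolding A_def by blast
    moreover have "b \<in> B" using eqvD(2)[OF P(1) ab(2)] unfolding B_def by blast
    ultimately have "(a,b) \<in> P'" unfolding P'_def by blast
    then have "card ((\<lambda>x. P'``{x}) ` terms H) < card ((\<lambda>x. P``{x}) ` terms H)"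
      using card_less[OF fin P(1) e' _ ab(1,2) _ ab(3)] unfolding P'_def by blast
    then have "card ((\<lambda>x. P'``{x}) ` terms H) + Suc j \<le> card (terms H)" using cb by linarith
    then show ?thesis using e' W by blast
  qed
qed

theorem proposition3p9:
  fixes G :: "('v, 'f) pred set"
  assumes "finite G"
  shows "\<forall>G' N. G' \<subseteq> G \<and> N \<ge> 3 * card (terms G) \<longrightarrow>
           (Sat_unsat N G' \<longleftrightarrow> \<not> euf_satisfiable G')"
proof (intro allI impI)
  fix G' :: "('v,'f) pred set" and N
  assume a: "G' \<subseteq> G \<and> N \<ge> 3 * card (terms G)"
  have finG: "finite (terms G)" using finite_terms[OF assms] .
  have finT: "finite (terms G')" using finite_subset[OF terms_mono finG] a by blast
  have cT: "card (terms G') \<le> card (terms G)" using card_mono[OF finG terms_mono] a by blast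
  show "Sat_unsat N G' \<longleftrightarrow> \<not> euf_satisfiable G'"
  proof
    assume "Sat_unsat N G'"
    then obtain X Y where XY: "Eq X Y \<in> sat_iter N G'" "Neq X Y \<in> sat_iter N G'"
      unfolding Sat_unsat_def bot_derivable_def by blast
    show "\<not> euf_satisfiable G'"
    proof
      assume "euf_satisfiable G'"
      then obtain I :: "'f \<Rightarrow> ('v,'f) trm list \<Rightarrow> ('v,'f) trm" and \<sigma> where h: "\<forall>g\<in>G'. holds I \<sigma> g"
        unfolding euf_satisfiable_def sat_in_def by blast
      have "eval I \<sigma> X = eval I \<sigma> Y" using sound[OF h XY(1)] .
      moreover have "holds I \<sigma> (Neq X Y)" using h Neq_in[OF XY(2)] by blast
      ultimately show False by simp
    qed
  next
    assume ns: "\<not> euf_satisfiable G'"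
    show "Sat_unsat N G'"
    proof (rule ccontr)
      assume nb: "\<not> Sat_unsat N G'"
      show False
      proof (cases "G' = {}")
        case True
        then have "euf_satisfiable G'" unfolding euf_satisfiable_def sat_in_def by simp
        then show False using ns by blast
      next
        case False
        then obtain g where "g \<in> G'" by blast
        then have ne: "terms G' \<noteq> {}"
          by (cases g) (auto dest: terms_Eq terms_Neq)
        then have "card (terms G') \<ge> 1" using finT by (simp add: Suc_le_eq card_gt_0_iff)
        then have m1: "card (terms G) \<ge> 1" using cT by simp
        define j where "j = card (terms G) - 1"
        have jN: "3*j+1 \<le> N" using a m1 unfolding j_def by arith
        obtain P where P: "eqv (terms G') P" "\<And>X Y. (X,Y) \<in> P \<Longrightarrow> Eq X Y \<in> sat_iter (3*j+1) G'"
          "closed G' P \<or> card ((\<lambda>x. P``{x}) ` terms G') + j \<le> card (terms G')"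
          using stage[OF finT, of j] by blast
        have PN: "Eq X Y \<in> sat_iter N G'" if "(X,Y) \<in> P" for X Y
          using P(2)[OF that] sat_iter_mono[OF jN] by blast
        show False
        proof (cases "closed G' P")
          case True
          have "\<forall>s t. Neq s t \<in> G' \<longrightarrow> (s,t) \<notin> P"
          proof (intro allI impI notI)
            fix s t assume "Neq s t \<in> G'" "(s,t) \<in> P"
            then have "bot_derivable (sat_iter N G')"
              unfolding bot_derivable_def using PN input_in by blast
            then show False using nb unfolding Sat_unsat_def by blast
          qed
          then have "euf_satisfiable G'" using model[OF P(1) True] by blast
          then show False using ns by blast
        next
          case False
          then have c1: "card ((\<lambda>x. P``{x}) ` terms G') \<le> 1" using P(3) cT unfolding j_def by linarith
          obtain a b where ab: "a \<in> terms G'" "b \<in> terms G'" "(a,b) \<notin> P"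
            using edge[OF P(1) False P(2)] by blast
          have "P``{a} \<noteq> P``{b}"
          proof
            assume "P``{a} = P``{b}"
            moreover have "b \<in> P``{b}" using eqvD(2)[OF P(1) ab(2)] by simp
            ultimately show False using ab(3) by (metis Image_singleton_iff)
          qed
          then have "card {P``{a}, P``{b}} = 2" by simp
          moreover have "{P``{a}, P``{b}} \<subseteq> (\<lambda>x. P``{x}) ` terms G'" using ab by auto
          ultimately have "2 \<le> card ((\<lambda>x. P``{x}) ` terms G')"
            using card_mono[OF finite_imageI[OF finT]] by metis
          then show False using c1 by simp
        qed
      qed
    qed
  qed
qed

end
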